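(* For any data as described in the context (any integers $I\ge 2$, $N^{\mathsf M},N^{\mathsf R}\ge 1$, $L\ge1$, $B_j\ge 1$, any discount factor $\delta\in(0,1)$, any real cost, yield and salvage parameters, any spot prices $s^l_i\in\mathbb{R}^3_+$, any real penalty coefficients $\Delta^l_{i,j,b}$, and any initial mode $x_0\in\{\mathsf O,\mathsf M_{N^{\mathsf M}}\}$), the pathwise linear program (PLP) has a finite optimal objective function value and at least one bounded optimal solution.
   Context: Stages are $\mathcal{I}=\{0,1,\dots,I-1\}$. Operating modes are $\mathsf A$ (abandoned), $\mathsf M_1,\dots,\mathsf M_{N^{\mathsf M}}$ (mothballing/mothballed), $\mathsf O$ (operational), $\mathsf R_1,\dots,\mathsf R_{N^{\mathsf R}-1}$ (reactivating). Let $\mathcal{X}'=\{\mathsf O,\mathsf M_{N^{\mathsf M}}\}$ and $\mathcal{X}''=\mathcal{X}'\cup\{\mathsf A\}$. Feasible action sets $\mathcal{A}_i(x)$ for $x\in\mathcal{X}''$: for $i\le I-2$, $\mathcal{A}_i(\mathsf O)=\{\mathsf A,\mathsf M_1,\mathsf P,\mathsf S\}$ if $i\le I-1-N^{\mathsf M}$ and $\{\mathsf A,\mathsf P,\mathsf S\}$ otherwise; $\mathcal{A}_i(\mathsf M_{N^{\mathsf M}})=\{\mathsf A,\mathsf M_{N^{\mathsf M}},\mathsf R_1\}$ if $i\le I-1-N^{\mathsf R}$ and $\{\mathsf A,\mathsf M_{N^{\mathsf M}}\}$ otherwise; $\mathcal{A}_i(\mathsf A)=\{\mathsf A\}$; and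 $\mathcal{A}_{I-1}(x)=\{\mathsf A\}$ for all $x$. For spot prices $s=(s^{C},s^{E},s^{N})\in\mathbb{R}^3_+$ and real constants $Q,\gamma_C,\gamma_N,\mathsf C_{\mathsf P},\mathsf C_{\mathsf S},\mathsf C_{\mathsf M},\mathsf I_{\mathsf M},\mathsf I_{\mathsf R},S$, the reward is $r(\mathsf O,s,\mathsf P)=(s^E-\gamma_C s^C-\gamma_N s^N)Q-\mathsf C_{\mathsf P}$, $r(\mathsf O,s,\mathsf S)=-\mathsf C_{\mathsf S}$, $r(\mathsf O,s,\mathsf M_1)=-\mathsf I_{\mathsf M}$, $r(\mathsf M_{N^{\mathsf M}},s,\mathsf M_{N^{\mathsf M}})=-\mathsf C_{\mathsf M}$, $r(\mathsf M_{N^{\mathsf M}},s,\mathsf R_1)=-\mathsf I_{\mathsf R}$, $r(\mathsf O,s,\mathsf A)=r(\mathsf M_{N^{\mathsf M}},s,\mathsf A)=S$, $r(\mathsf A,s,\mathsf A)=0$. The modified transition $f'(x,a)$ equals $\mathsf O$ for $(x,a)\in\{(\mathsf O,\mathsf P),(\mathsf O,\mathsf S),(\mathsf M_{N^{\mathsf M}},\mathsf R_1)\}$, equals $\mathsf M_{N^{\mathsf M}}$ for $(x,a)\in\{(\mathsf O,\mathsf M_1),(\mathsf M_{N^{\mathsf M}},\mathsf M_{N^{\mathsf M}})\}$, and equals $\mathsf A$ when $a=\mathsf A$. The stage transition is $g(i,x,a)=i+N^{\mathsf M}$ if $(x,a)=(\mathsf O,\mathsf M_1)$, $i+N^{\mathsf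 R}$ if $(x,a)=(\mathsf M_{N^{\mathsf M}},\mathsf R_1)$, and $i+1$ otherwise. Data: $L$ sample paths indexed by $l\in\mathcal{L}=\{1,\dots,L\}$, with spot prices $s^l_i\in\mathbb{R}^3_+$ for each $i\in\mathcal{I}$, and real penalty coefficients $\Delta^l_{i,j,b}$ for $i<j$, $b\in\mathcal{B}_j=\{1,\dots,B_j\}$ (in the paper, $\Delta^l_{i,j,b}=\delta^{j-i}(\phi_{j,b}(F^l_j)-\mathbb{E}[\phi_{j,b}(F_j)\mid F^l_i])$ for basis functions $\phi_{j,b}$ of simulated forward curves $F^l$). Decision variables: weights $\beta_{j,x,b}\in\mathbb{R}$ for $j\in\{1,\dots,I-2\}$, $x\in\mathcal{X}'$, $b\in\mathcal{B}_j$; and $U^l_0(x_0)$ and $U^l_i(x)$ for $l\in\mathcal{L}$, $i\in\{1,\dots,I-1\}$, $x\in\mathcal{X}''$. For $(l,i,x,a)$ let $j=g(i,x,a)$, $x'=f'(x,a)$, and define the penalty $\pi^l_i(x,a;\beta)=\sum_{b\in\mathcal{B}_j}\beta_{j,x',b}\Delta^l_{i,j,b}$ if $x'\in\mathcal{X}'$ and $j\le I-2$, and $0$ otherwise. PLP is: minimize $\frac1L\sum_{l\in\mathcal{L}}U^l_0(x_0)$ over $(\beta,U)$ subject to, for all $l$: $U^l_0(x_0)\ge r(x_0,s^l_0,a)-\pi^l_0(x_0,a;\beta)+\delta U^l_{g(0,x_0,a)}(f'(x_0,a))$ for all $a\in\mathcal{A}_0(x_0)$; $U^l_i(x)\ge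 r(x,s^l_i,a)-\pi^l_i(x,a;\beta)+\delta U^l_{g(i,x,a)}(f'(x,a))$ for all $i\in\{1,\dots,I-2\}$, $x\in\mathcal{X}''$, $a\in\mathcal{A}_i(x)$; and $U^l_{I-1}(x)\ge r(x,s^l_{I-1},\mathsf A)$ for all $x\in\mathcal{X}''$. *)

theory Defs
  imports Complex_Main
begin

text \<open>Operating modes relevant for PLP: abandoned (A), fully mothballed (M_{N^M}),
  operational (O). The intermediate modes M_1..M_{N^M-1}, R_1..R_{N^R-1} are
  skipped by the modified transition f' and the stage transition g.\<close>
datatype mode = ModeA | ModeM | ModeO

text \<open>Actions: A (abandon), M_1 (start mothballing), P (produce), S (suspend),
  M_{N^M} (stay mothballed), R_1 (start reactivating).\<close>
datatype action = ActA | ActM1 | ActP | ActS | ActMN | ActR1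

record plp_data =
  nI   :: nat
  nM   :: nat
  nR   :: nat
  nL   :: nat
  nB   :: "nat \<Rightarrow> nat"
  disc :: real
  qQ   :: real
  gC   :: real
  gN   :: real
  cP   :: real
  cS   :: real
  cM   :: real
  iM   :: real
  iR   :: real
  salv :: real
  spot :: "nat \<Rightarrow> nat \<Rightarrow> real \<times> real \<times> real"   (* spot l i = (s^C, s^E, s^N) *)
  pen  :: "nat \<Rightarrow> nat \<Rightarrow> nat \<Rightarrow> nat \<Rightarrow> real"

definition feas_act :: "plp_data \<Rightarrow> nat \<Rightarrow> mode \<Rightarrow> action set" where
  "feas_act d i x =
     (if i \<le> nI d - 2 then
        (case x of
           ModeO \<Rightarrow> (if i + nM d \<le> nI d - 1 then {ActA, ActM1, ActP, ActS} else {ActA, ActP, ActS})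
         | ModeM \<Rightarrow> (if i + nR d \<le> nI d - 1 then {ActA, ActMN, ActR1} else {ActA, ActMN})
         | ModeA \<Rightarrow> {ActA})
      else {ActA})"

text \<open>Reward r(x,s,a); s = (s^C, s^E, s^N). Infeasible pairs are given value 0
  (they never occur in PLP).\<close>
definition reward :: "plp_data \<Rightarrow> mode \<Rightarrow> real \<times> real \<times> real \<Rightarrow> action \<Rightarrow> real" where
  "reward d x s a =
     (case s of (sC, sE, sN) \<Rightarrow>
       (case (x, a) of
          (ModeO, ActP) \<Rightarrow> (sE - gC d * sC - gN d * sN) * qQ d - cP d
        | (ModeO, ActS) \<Rightarrow> - cS d
        | (ModeO, ActM1) \<Rightarrow> - iM d
        | (ModeM, ActMN) \<Rightarrow> - cM d
        | (ModeM, ActR1) \<Rightarrow> - iR d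
        | (ModeO, ActA) \<Rightarrow> salv d
        | (ModeM, ActA) \<Rightarrow> salv d
        | (ModeA, ActA) \<Rightarrow> 0
        | _ \<Rightarrow> 0))"

definition ftrans :: "mode \<Rightarrow> action \<Rightarrow> mode" where
  "ftrans x a =
     (if a = ActA then ModeA
      else if (x, a) \<in> {(ModeO, ActP), (ModeO, ActS), (ModeM, ActR1)} then ModeO
      else if (x, a) \<in> {(ModeO, ActM1), (ModeM, ActMN)} then ModeM
      else ModeA)"

definition gstage :: "plp_data \<Rightarrow> nat \<Rightarrow> mode \<Rightarrow> action \<Rightarrow> nat" where
  "gstage d i x a =
     (if (x, a) = (ModeO, ActM1) then i + nM d
      else if (x, a) = (ModeM, ActR1) then i + nR d
      else i + 1)"

definition penalty :: "plp_data \<Rightarrow> (nat \<Rightarrow> mode \<Rightarrow> nat \<Rightarrow> real) \<Rightarrow> nat \<Rightarrow> nat \<Rightarrow> mode \<Rightarrow> action \<Rightarrow> real" where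
  "penalty d \<beta> l i x a =
     (let j = gstage d i x a; x' = ftrans x a in
      if x' \<in> {ModeO, ModeM} \<and> j \<le> nI d - 2
      then (\<Sum>b\<in>{1..nB d j}. \<beta> j x' b * pen d l i j b) else 0)"

definition plp_feasible :: "plp_data \<Rightarrow> mode \<Rightarrow> (nat \<Rightarrow> mode \<Rightarrow> nat \<Rightarrow> real)
                            \<Rightarrow> (nat \<Rightarrow> nat \<Rightarrow> mode \<Rightarrow> real) \<Rightarrow> bool" where
  "plp_feasible d x0 \<beta> U \<longleftrightarrow>
     (\<forall>l\<in>{1..nL d}.
        (\<forall>a\<in>feas_act d 0 x0.
           U l 0 x0 \<ge> reward d x0 (spot d l 0) a - penalty d \<beta> l 0 x0 a
                      + disc d * U l (gstage d 0 x0 a) (ftrans x0 a)) \<and>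
        (\<forall>i\<in>{1..nI d - 2}. \<forall>x::mode. \<forall>a\<in>feas_act d i x.
           U l i x \<ge> reward d x (spot d l i) a - penalty d \<beta> l i x a
                      + disc d * U l (gstage d i x a) (ftrans x a)) \<and>
        (\<forall>x::mode. U l (nI d - 1) x \<ge> reward d x (spot d l (nI d - 1)) ActA))"

definition plp_obj :: "plp_data \<Rightarrow> mode \<Rightarrow> (nat \<Rightarrow> nat \<Rightarrow> mode \<Rightarrow> real) \<Rightarrow> real" where
  "plp_obj d x0 U = (1 / real (nL d)) * (\<Sum>l\<in>{1..nL d}. U l 0 x0)"

end

theory Submission
  imports Defs "HOL-Analysis.Analysis"
begin


definition lsum :: "'v set \<Rightarrow> ('v \<Rightarrow> real) \<Rightarrow> ('v \<Rightarrow> real) \<Rightarrow> real" where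
  "lsum W a z = (\<Sum>v\<in>W. a v * z v)"

definition satc :: "'v set \<Rightarrow> (('v \<Rightarrow> real) \<times> real) set \<Rightarrow> ('v \<Rightarrow> real) \<Rightarrow> bool" where
  "satc W C z \<longleftrightarrow> (\<forall>c\<in>C. lsum W (fst c) z \<le> snd c)"

definition comb :: "'v \<Rightarrow> ('v \<Rightarrow> real) \<times> real \<Rightarrow> ('v \<Rightarrow> real) \<times> real \<Rightarrow> ('v \<Rightarrow> real) \<times> real" where
  "comb v p n = ((\<lambda>j. (- fst n v) * fst p j + fst p v * fst n j), (- fst n v) * snd p + fst p v * snd n)"

definition elim :: "'v \<Rightarrow> (('v \<Rightarrow> real) \<times> real) set \<Rightarrow> (('v \<Rightarrow> real) \<times> real) set" where
  "elim v C = {c\<in>C. fst c v = 0} \<union> (\<lambda>(p,n). comb v p n) ` ({c\<in>C. fst c v > 0} \<times> {c\<in>C. fst c v < 0})"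

lemma lsum_lin: "lsum W (\<lambda>j. c1 * a1 j + c2 * a2 j) z = c1 * lsum W a1 z + c2 * lsum W a2 z"
  unfolding lsum_def by (simp add: algebra_simps sum.distrib sum_distrib_left)

lemma lsum_upd_zero: "a v = 0 \<Longrightarrow> lsum W a (z(v:=r)) = lsum W a z"
  unfolding lsum_def by (intro sum.cong) auto

lemma lsum_upd: "finite W \<Longrightarrow> v \<in> W \<Longrightarrow> lsum W a (z(v:=r)) = lsum (W-{v}) a z + a v * r"
proof -
  assume W: "finite W" "v \<in> W"
  have "lsum W a (z(v:=r)) = a v * r + (\<Sum>x\<in>W-{v}. a x * (z(v:=r)) x)"
    unfolding lsum_def using sum.remove[OF W, of "\<lambda>x. a x * (z(v:=r)) x"] by simp
  also have "(\<Sum>x\<in>W-{v}. a x * (z(v:=r)) x) = lsum (W-{v}) a z"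
    unfolding lsum_def by (intro sum.cong) auto
  finally show ?thesis by linarith
qed

lemma comb_v: "fst (comb v p n) v = 0"
  unfolding comb_def by simp

lemma finite_elim: "finite C \<Longrightarrow> finite (elim v C)"
  unfolding elim_def by auto

lemma elim_sound:
  assumes "satc W C (z(v:=r))"
  shows "satc W (elim v C) z"
  unfolding satc_def
proof
  fix c assume c: "c \<in> elim v C"
  show "lsum W (fst c) z \<le> snd c"
  proof (cases "c \<in> C \<and> fst c v = 0")
    case True
    then show ?thesis using assms lsum_upd_zero[of "fst c" v W z r] unfolding satc_def by auto
  next
    case False
    then obtain p n where p: "p \<in> C" "fst p v > 0" and n: "n \<in> C" "fst n v < 0" and cc: "c = comb v p n"
      using c unfolding elim_def by auto
    have "lsum W (fst c) z = lsum W (fst c) (z(v:=r))"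
      using lsum_upd_zero[of "fst c" v W z r] cc comb_v by metis
    also have "\<dots> = (- fst n v) * lsum W (fst p) (z(v:=r)) + fst p v * lsum W (fst n) (z(v:=r))"
      unfolding cc comb_def fst_conv by (rule lsum_lin)
    also have "\<dots> \<le> (- fst n v) * snd p + fst p v * snd n"
      using assms p n unfolding satc_def
      by (intro add_mono mult_left_mono) auto
    finally show ?thesis unfolding cc comb_def by simp
  qed
qed

lemma elim_complete:
  assumes W: "finite W" "v \<in> W" and C: "finite C" and s: "satc W (elim v C) z"
  shows "\<exists>r. satc W C (z(v:=r))"
proof -
  define R where "R c = snd c - lsum (W-{v}) (fst c) z" for c
  define P where "P = {c\<in>C. fst c v > 0}"
  define N where "N = {c\<in>C. fst c v < 0}"
  define ub where "ub c = R c / fst c v" for c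
  have fP: "finite P" "finite N" using C unfolding P_def N_def by auto
  have key: "R n / fst n v \<le> R p / fst p v" if p: "p \<in> P" and n: "n \<in> N" for p n
  proof -
    have "comb v p n \<in> elim v C" using p n unfolding elim_def P_def N_def by force
    then have "lsum W (fst (comb v p n)) z \<le> snd (comb v p n)" using s unfolding satc_def by auto
    moreover have "lsum W (fst (comb v p n)) z = lsum (W-{v}) (fst (comb v p n)) z"
      using lsum_upd[OF W, of "fst (comb v p n)" z "z v"] comb_v[of v p n] by simp
    moreover have "lsum (W-{v}) (fst (comb v p n)) z = (- fst n v) * lsum (W-{v}) (fst p) z + fst p v * lsum (W-{v}) (fst n) z"
      unfolding comb_def fst_conv by (rule lsum_lin)
    ultimately have "0 \<le> (- fst n v) * R p + fst p v * R n"
      unfolding R_def comb_def by (simp add: algebra_simps)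
    moreover have a: "fst p v > 0" and b: "fst n v < 0" using p n unfolding P_def N_def by auto
    ultimately have nn: "0 \<le> (- fst n v) * R p + fst p v * R n" by simp
    have "R p / fst p v - R n / fst n v = ((- fst n v) * R p + fst p v * R n) / (fst p v * (- fst n v))"
      using a b by (simp add: field_simps)
    also have "\<dots> \<ge> 0" using nn a b by (intro divide_nonneg_pos) (auto simp: mult_pos_neg)
    finally show ?thesis by simp
  qed
  define r where "r = (if N = {} then (if P = {} then 0 else Min (ub ` P)) else Max (ub ` N))"
  have rP: "r \<le> ub p" if "p \<in> P" for p
  proof (cases "N = {}")
    case True then show ?thesis using that fP unfolding r_def by auto
  next
    case False
    have "Max (ub ` N) \<le> ub p"
      using fP False key that unfolding ub_def by (subst Max_le_iff) auto
    then show ?thesis using False unfolding r_def by simp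
  qed
  have rN: "ub n \<le> r" if "n \<in> N" for n
    using that fP unfolding r_def by auto
  have "satc W C (z(v:=r))"
    unfolding satc_def
  proof
    fix c assume c: "c \<in> C"
    have eq: "lsum W (fst c) (z(v:=r)) = lsum (W-{v}) (fst c) z + fst c v * r" using lsum_upd[OF W] .
    consider "fst c v = 0" | "fst c v > 0" | "fst c v < 0" by linarith
    then show "lsum W (fst c) (z(v:=r)) \<le> snd c"
    proof cases
      case 1
      then have "c \<in> elim v C" using c unfolding elim_def by auto
      then show ?thesis using s lsum_upd_zero[of "fst c" v W z r] 1 unfolding satc_def by auto
    next
      case 2
      then have "r \<le> R c / fst c v" using rP[of c] c unfolding P_def ub_def by auto
      then have "fst c v * r \<le> R c" using 2 by (simp add: pos_le_divide_eq mult.commute)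
      then show ?thesis using eq unfolding R_def by simp
    next
      case 3
      then have "R c / fst c v \<le> r" using rN[of c] c unfolding N_def ub_def by auto
      then have "fst c v * r \<le> R c" using 3 by (simp add: neg_divide_le_eq mult.commute)
      then show ?thesis using eq unfolding R_def by simp
    qed
  qed
  then show ?thesis by blast
qed

lemma elim_vanish: "\<forall>c\<in>C. fst c u = 0 \<Longrightarrow> \<forall>c\<in>elim v C. fst c u = 0"
proof
  fix c assume A: "\<forall>c\<in>C. fst c u = 0" and c: "c \<in> elim v C"
  show "fst c u = 0"
  proof (cases "c \<in> C")
    case True then show ?thesis using A by auto
  next
    case False
    then obtain p n where "p \<in> C" "n \<in> C" "c = comb v p n" using c unfolding elim_def by auto
    then show ?thesis using A unfolding comb_def by auto
  qed
qed

lemma elim_vanish_v: "\<forall>c\<in>elim v C. fst c v = 0"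
  unfolding elim_def using comb_v by auto

lemma multi_elim:
  assumes W: "finite W" and V: "V \<subseteq> W" and C: "finite C"
  shows "\<exists>C'. finite C' \<and> (\<forall>c\<in>C'. \<forall>u\<in>V. fst c u = 0) \<and>
     (\<forall>z. satc W C' z \<longleftrightarrow> (\<exists>z'. (\<forall>u. u \<notin> V \<longrightarrow> z' u = z u) \<and> satc W C z'))"
proof -
  have "finite V" using V W finite_subset by auto
  then show ?thesis using V
  proof (induction V rule: finite_induct)
    case empty
    have "(\<exists>z'. (\<forall>u. u \<notin> {} \<longrightarrow> z' u = z u) \<and> satc W C z') \<longleftrightarrow> satc W C z" for z
    proof
      assume "\<exists>z'. (\<forall>u. u \<notin> {} \<longrightarrow> z' u = z u) \<and> satc W C z'"
      then obtain z' where "\<forall>u. z' u = z u" "satc W C z'" by blast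
      moreover from this(1) have "z' = z" by auto
      ultimately show "satc W C z" by simp
    qed blast
    then show ?case using C by (intro exI[of _ C]) simp
  next
    case (insert v V)
    have "V \<subseteq> W" using insert.prems by simp
    from insert.IH[OF this] obtain C' where C': "finite C'" "\<forall>c\<in>C'. \<forall>u\<in>V. fst c u = 0"
      "\<And>z. satc W C' z \<longleftrightarrow> (\<exists>z'. (\<forall>u. u \<notin> V \<longrightarrow> z' u = z u) \<and> satc W C z')" by blast
    have vW: "v \<in> W" using insert by auto
    show ?case
    proof (intro exI conjI allI)
      show "finite (elim v C')" by (rule finite_elim[OF C'(1)])
      show "\<forall>c\<in>elim v C'. \<forall>u\<in>insert v V. fst c u = 0"
      proof (intro ballI)
        fix c u assume c: "c \<in> elim v C'" and u: "u \<in> insert v V"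
        show "fst c u = 0"
        proof (cases "u = v")
          case True then show ?thesis using elim_vanish_v[of v C'] c by simp
        next
          case False
          then have "u \<in> V" using u by simp
          then have "\<forall>c\<in>C'. fst c u = 0" using C'(2) by simp
          then show ?thesis using elim_vanish[of C' u v] c by simp
        qed
      qed
      fix z
      show "satc W (elim v C') z \<longleftrightarrow> (\<exists>z'. (\<forall>u. u \<notin> insert v V \<longrightarrow> z' u = z u) \<and> satc W C z')"
      proof
        assume "satc W (elim v C') z"
        from elim_complete[OF W vW C'(1) this] obtain r where "satc W C' (z(v:=r))" by (elim exE)
        then obtain z' where "\<forall>u. u \<notin> V \<longrightarrow> z' u = (z(v:=r)) u" "satc W C z'" using C'(3)[of "z(v:=r)"] by blast
        then show "\<exists>z'. (\<forall>u. u \<notin> insert v V \<longrightarrow> z' u = z u) \<and> satc W C z'"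
          by (intro exI[of _ z']) auto
      next
        assume "\<exists>z'. (\<forall>u. u \<notin> insert v V \<longrightarrow> z' u = z u) \<and> satc W C z'"
        then obtain z' where z': "\<forall>u. u \<notin> insert v V \<longrightarrow> z' u = z u" "satc W C z'" by blast
        then have "\<forall>u. u \<notin> V \<longrightarrow> z' u = (z(v:=z' v)) u" by auto
        then have "satc W C' (z(v:=z' v))" using C'(3)[of "z(v:=z' v)"] z'(2) by blast
        then show "satc W (elim v C') z" by (rule elim_sound)
      qed
    qed
  qed
qed

lemma satc_local: "(\<forall>u\<in>W. z u = z' u) \<Longrightarrow> satc W C z \<longleftrightarrow> satc W C z'"
  unfolding satc_def lsum_def by (simp cong: sum.cong)

lemma closed_proj:
  assumes W: "finite W" and t: "t \<in> W" and C: "finite C"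
  shows "closed {w. \<exists>z. z t = w \<and> satc W C z}"
proof -
  obtain C' where C': "finite C'" "\<forall>c\<in>C'. \<forall>u\<in>W-{t}. fst c u = 0"
    "\<And>z. satc W C' z \<longleftrightarrow> (\<exists>z'. (\<forall>u. u \<notin> W-{t} \<longrightarrow> z' u = z u) \<and> satc W C z')"
    using multi_elim[OF W _ C, of "W-{t}"] by blast
  have ls: "lsum W (fst c) (\<lambda>_. w) = fst c t * w" if "c \<in> C'" for c w
  proof -
    have "lsum W (fst c) (\<lambda>_. w) = (\<Sum>v\<in>W. if v = t then fst c t * w else 0)"
      unfolding lsum_def using C'(2) that by (intro sum.cong) auto
    also have "\<dots> = fst c t * w" using W t by simp
    finally show ?thesis .
  qed
  have "{w. \<exists>z. z t = w \<and> satc W C z} = (\<Inter>c\<in>C'. {w. fst c t * w \<le> snd c})"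
  proof (intro set_eqI iffI)
    fix w assume "w \<in> {w. \<exists>z. z t = w \<and> satc W C z}"
    then obtain z where z: "z t = w" "satc W C z" by blast
    define z' where "z' u = (if u \<in> W then z u else w)" for u
    have "satc W C z'" using z(2) satc_local[of W z z' C] unfolding z'_def by auto
    moreover have "\<forall>u. u \<notin> W-{t} \<longrightarrow> z' u = w" unfolding z'_def using z(1) by auto
    ultimately have "satc W C' (\<lambda>_. w)" using C'(3)[of "\<lambda>_. w"] by blast
    then show "w \<in> (\<Inter>c\<in>C'. {w. fst c t * w \<le> snd c})" using ls unfolding satc_def by auto
  next
    fix w assume "w \<in> (\<Inter>c\<in>C'. {w. fst c t * w \<le> snd c})"
    then have "satc W C' (\<lambda>_. w)" using ls unfolding satc_def by auto
    then obtain z' where "\<forall>u. u \<notin> W-{t} \<longrightarrow> z' u = w" "satc W C z'" using C'(3)[of "\<lambda>_. w"] by blast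
    then show "w \<in> {w. \<exists>z. z t = w \<and> satc W C z}" by auto
  qed
  moreover have "closed (\<Inter>c\<in>C'. {w::real. fst c t * w \<le> snd c})"
    by (intro closed_INT ballI closed_Collect_le continuous_intros)
  ultimately show ?thesis by simp
qed



instance mode :: finite
proof
  have "UNIV = {ModeA, ModeM, ModeO}" by (auto intro: mode.exhaust)
  then show "finite (UNIV :: mode set)" by (metis finite.emptyI finite.insertI)
qed

instance action :: finite
proof
  have "UNIV = {ActA, ActM1, ActP, ActS, ActMN, ActR1}" by (auto intro: action.exhaust)
  then show "finite (UNIV :: action set)" by (metis finite.emptyI finite.insertI)
qed

type_synonym var = "(nat \<times> mode \<times> nat) + (nat \<times> nat \<times> mode) + unit"

definition bet :: "(var \<Rightarrow> real) \<Rightarrow> nat \<Rightarrow> mode \<Rightarrow> nat \<Rightarrow> real" where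
  "bet z = (\<lambda>j x b. z (Inl (j,x,b)))"
definition UU :: "(var \<Rightarrow> real) \<Rightarrow> nat \<Rightarrow> nat \<Rightarrow> mode \<Rightarrow> real" where
  "UU z = (\<lambda>l i x. z (Inr (Inl (l,i,x))))"
definition tv :: var where "tv = Inr (Inr ())"

definition linloc :: "'v set \<Rightarrow> (('v \<Rightarrow> real) \<Rightarrow> real) \<Rightarrow> bool" where
  "linloc W f \<longleftrightarrow> (\<forall>z w. f (\<lambda>u. z u + w u) = f z + f w) \<and> (\<forall>c z. f (\<lambda>u. c * z u) = c * f z)
     \<and> (\<forall>z w. (\<forall>u\<in>W. z u = w u) \<longrightarrow> f z = f w)"

definition coefs :: "(('v \<Rightarrow> real) \<Rightarrow> real) \<Rightarrow> 'v \<Rightarrow> real" where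
  "coefs f = (\<lambda>v. f (\<lambda>u. if u = v then 1 else 0))"

lemma linloc_sum:
  assumes "linloc W f" "finite S"
  shows "f (\<lambda>u. \<Sum>v\<in>S. g v u) = (\<Sum>v\<in>S. f (g v))"
  using assms(2)
proof (induction S rule: finite_induct)
  case empty
  have h: "\<forall>c z. f (\<lambda>u. c * z u) = c * f z" using assms(1) unfolding linloc_def by blast
  show ?case using h[rule_format, of 0 "\<lambda>_. 0"] by simp
next
  case (insert v S)
  have "f (\<lambda>u. \<Sum>v\<in>insert v S. g v u) = f (\<lambda>u. g v u + (\<Sum>v\<in>S. g v u))"
    using insert by simp
  also have "\<dots> = f (g v) + f (\<lambda>u. \<Sum>v\<in>S. g v u)"
  proof -
    have h: "\<forall>z w. f (\<lambda>u. z u + w u) = f z + f w" using assms(1) unfolding linloc_def by blast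
    show ?thesis using h[rule_format, of "g v" "\<lambda>u. \<Sum>v\<in>S. g v u"] by simp
  qed
  finally show ?case using insert by simp
qed

lemma linloc_rep:
  assumes W: "finite W" and f: "linloc W f"
  shows "f z = lsum W (coefs f) z"
proof -
  have "f z = f (\<lambda>u. \<Sum>v\<in>W. z v * (if u = v then 1 else 0))"
  proof -
    have "\<forall>u\<in>W. z u = (\<Sum>v\<in>W. z v * (if u = v then 1 else 0))"
      using W by (simp add: if_distrib cong: if_cong)
    moreover have h3: "\<forall>z w. (\<forall>u\<in>W. z u = w u) \<longrightarrow> f z = f w" using f unfolding linloc_def by blast
    ultimately show ?thesis using h3[rule_format, of z "\<lambda>u. \<Sum>v\<in>W. z v * (if u = v then 1 else 0)"] by blast
  qed
  also have "\<dots> = (\<Sum>v\<in>W. f (\<lambda>u. z v * (if u = v then 1 else 0)))"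
    by (rule linloc_sum[OF f W])
  also have "\<dots> = (\<Sum>v\<in>W. z v * coefs f v)"
  proof (intro sum.cong refl)
    fix v
    have h2: "\<forall>c z. f (\<lambda>u. c * z u) = c * f z" using f unfolding linloc_def by blast
    show "f (\<lambda>u. z v * (if u = v then 1 else 0)) = z v * coefs f v"
      using h2[rule_format, of "z v" "\<lambda>u. if u = v then 1 else 0"] unfolding coefs_def by simp
  qed
  finally show ?thesis unfolding lsum_def by (simp add: mult.commute)
qed

lemma penalty_add:
  "penalty d (\<lambda>j x b. \<beta>1 j x b + \<beta>2 j x b) l i x a = penalty d \<beta>1 l i x a + penalty d \<beta>2 l i x a"
  unfolding penalty_def Let_def by (simp add: distrib_right sum.distrib)

lemma penalty_scale:
  "penalty d (\<lambda>j x b. c * \<beta> j x b) l i x a = c * penalty d \<beta> l i x a"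
  unfolding penalty_def Let_def by (simp add: sum_distrib_left mult.assoc)

lemma penalty_local:
  assumes "\<forall>j x b. j \<le> nI d \<and> b \<le> nB d j \<longrightarrow> \<beta>1 j x b = \<beta>2 j x b"
  shows "penalty d \<beta>1 l i x a = penalty d \<beta>2 l i x a"
  unfolding penalty_def Let_def using assms by (auto intro!: sum.cong)

lemma penalty_zero: "penalty d (\<lambda>j x b. 0) l i x a = 0"
  unfolding penalty_def Let_def by simp

lemma penalty_A: "penalty d \<beta> l i x ActA = 0"
  unfolding penalty_def Let_def ftrans_def by simp

lemma reward_AA: "reward d ModeA s ActA = 0"
  by (cases s) (simp add: reward_def)

lemma reward_xA: "x \<in> {ModeO, ModeM} \<Longrightarrow> reward d x s ActA = salv d"
  by (cases s) (auto simp: reward_def)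

lemma gstage_A: "gstage d i x ActA = i + 1"
  unfolding gstage_def by simp

lemma ftrans_A: "ftrans x ActA = ModeA"
  unfolding ftrans_def by simp

lemma gstage_le: "gstage d i x a \<le> i + nM d + nR d + 1"
  unfolding gstage_def by auto

lemma ActA_feas: "ActA \<in> feas_act d i x"
  unfolding feas_act_def by (cases x) auto

definition Wset :: "plp_data \<Rightarrow> var set" where
  "Wset d = Inl ` (SIGMA j:{..nI d}. UNIV \<times> {..nB d j}) \<union>
     Inr ` Inl ` ({..nL d} \<times> {..nI d + nM d + nR d + 1} \<times> UNIV) \<union> {tv}"

lemma finite_Wset: "finite (Wset d)"
  unfolding Wset_def by (intro finite_UnI finite_imageI finite_SigmaI finite_cartesian_product) auto

lemma tv_Wset: "tv \<in> Wset d"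
  unfolding Wset_def by simp

definition fg :: "plp_data \<Rightarrow> nat \<Rightarrow> nat \<Rightarrow> mode \<Rightarrow> action \<Rightarrow> (var \<Rightarrow> real) \<Rightarrow> real" where
  "fg d l i x a z = - penalty d (bet z) l i x a + disc d * UU z l (gstage d i x a) (ftrans x a) - UU z l i x"

definition ft :: "plp_data \<Rightarrow> nat \<Rightarrow> mode \<Rightarrow> (var \<Rightarrow> real) \<Rightarrow> real" where
  "ft d l x z = - UU z l (nI d - 1) x"

definition fo :: "plp_data \<Rightarrow> mode \<Rightarrow> (var \<Rightarrow> real) \<Rightarrow> real" where
  "fo d x0 z = plp_obj d x0 (UU z) - z tv"

lemma linloc_fg:
  assumes "l \<le> nL d" "i \<le> nI d"
  shows "linloc (Wset d) (fg d l i x a)"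
  unfolding linloc_def
proof (intro conjI allI impI)
  fix z w :: "var \<Rightarrow> real"
  show "fg d l i x a (\<lambda>u. z u + w u) = fg d l i x a z + fg d l i x a w"
    unfolding fg_def bet_def UU_def using penalty_add[of d "bet z" "bet w"] unfolding bet_def
    by (simp add: algebra_simps)
next
  fix c and z :: "var \<Rightarrow> real"
  show "fg d l i x a (\<lambda>u. c * z u) = c * fg d l i x a z"
    unfolding fg_def bet_def UU_def using penalty_scale[of d c "bet z"] unfolding bet_def
    by (simp add: algebra_simps)
next
  fix z w :: "var \<Rightarrow> real"
  assume zw: "\<forall>u\<in>Wset d. z u = w u"
  have "penalty d (bet z) l i x a = penalty d (bet w) l i x a"
    by (rule penalty_local) (use zw in \<open>auto simp: bet_def Wset_def\<close>)
  moreover have "UU z l (gstage d i x a) (ftrans x a) = UU w l (gstage d i x a) (ftrans x a)"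
    using zw assms gstage_le[of d i x a] unfolding UU_def Wset_def by auto
  moreover have "UU z l i x = UU w l i x"
    using zw assms unfolding UU_def Wset_def by auto
  ultimately show "fg d l i x a z = fg d l i x a w" unfolding fg_def by simp
qed

lemma linloc_ft:
  assumes "l \<le> nL d"
  shows "linloc (Wset d) (ft d l x)"
  unfolding linloc_def ft_def UU_def using assms by (auto simp: Wset_def)

lemma linloc_fo:
  shows "linloc (Wset d) (fo d x0)"
  unfolding linloc_def
proof (intro conjI allI impI)
  fix z w :: "var \<Rightarrow> real"
  show "fo d x0 (\<lambda>u. z u + w u) = fo d x0 z + fo d x0 w"
    unfolding fo_def plp_obj_def UU_def by (simp add: algebra_simps sum.distrib)
next
  fix c and z :: "var \<Rightarrow> real"
  show "fo d x0 (\<lambda>u. c * z u) = c * fo d x0 z"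
    unfolding fo_def plp_obj_def UU_def by (simp add: algebra_simps sum_distrib_left)
next
  fix z w :: "var \<Rightarrow> real"
  assume zw: "\<forall>u\<in>Wset d. z u = w u"
  have "(\<Sum>l\<in>{1..nL d}. UU z l 0 x0) = (\<Sum>l\<in>{1..nL d}. UU w l 0 x0)"
    using zw unfolding UU_def Wset_def by (intro sum.cong) auto
  moreover have "z tv = w tv" using zw tv_Wset by blast
  ultimately show "fo d x0 z = fo d x0 w" unfolding fo_def plp_obj_def by simp
qed

lemma linloc_neg: "linloc W f \<Longrightarrow> linloc W (\<lambda>z. - f z)"
  unfolding linloc_def by auto

definition IDX :: "plp_data \<Rightarrow> mode \<Rightarrow> (nat \<times> nat \<times> mode \<times> action) set" where
  "IDX d x0 = {(l,i,x,a). l \<in> {1..nL d} \<and> ((i = 0 \<and> x = x0) \<or> i \<in> {1..nI d - 2}) \<and> a \<in> feas_act d i x}"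

lemma finite_IDX: "finite (IDX d x0)"
proof -
  have "IDX d x0 \<subseteq> {..nL d} \<times> {..nI d} \<times> UNIV \<times> UNIV" unfolding IDX_def by auto
  then show ?thesis by (rule finite_subset) auto
qed

definition Cset :: "plp_data \<Rightarrow> mode \<Rightarrow> ((var \<Rightarrow> real) \<times> real) set" where
  "Cset d x0 = (\<lambda>(l,i,x,a). (coefs (fg d l i x a), - reward d x (spot d l i) a)) ` IDX d x0
     \<union> (\<lambda>(l,x). (coefs (ft d l x), - reward d x (spot d l (nI d - 1)) ActA)) ` ({1..nL d} \<times> UNIV)
     \<union> {(coefs (fo d x0), 0), (coefs (\<lambda>z. - fo d x0 z), 0)}"

lemma finite_Cset: "finite (Cset d x0)"
  unfolding Cset_def using finite_IDX by auto

lemma sat_iff: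
  "satc (Wset d) (Cset d x0) z \<longleftrightarrow>
    (\<forall>(l,i,x,a)\<in>IDX d x0. fg d l i x a z \<le> - reward d x (spot d l i) a) \<and>
    (\<forall>l\<in>{1..nL d}. \<forall>x. ft d l x z \<le> - reward d x (spot d l (nI d - 1)) ActA) \<and>
    fo d x0 z \<le> 0 \<and> - fo d x0 z \<le> 0"
proof -
  have r1: "lsum (Wset d) (coefs (fg d l i x a)) z = fg d l i x a z" if "(l,i,x,a) \<in> IDX d x0" for l i x a
    using that linloc_rep[OF finite_Wset linloc_fg] unfolding IDX_def by auto
  have r2: "lsum (Wset d) (coefs (ft d l x)) z = ft d l x z" if "l \<in> {1..nL d}" for l x
    using that linloc_rep[OF finite_Wset linloc_ft] by auto
  have r3: "lsum (Wset d) (coefs (fo d x0)) z = fo d x0 z"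
    using linloc_rep[OF finite_Wset linloc_fo] by auto
  have r4: "lsum (Wset d) (coefs (\<lambda>z. - fo d x0 z)) z = - fo d x0 z"
    using linloc_rep[OF finite_Wset linloc_neg[OF linloc_fo]] by metis
  have EA: "(\<forall>c\<in>(\<lambda>(l,i,x,a). (coefs (fg d l i x a), - reward d x (spot d l i) a)) ` IDX d x0. lsum (Wset d) (fst c) z \<le> snd c)
     \<longleftrightarrow> (\<forall>(l,i,x,a)\<in>IDX d x0. fg d l i x a z \<le> - reward d x (spot d l i) a)"
  proof
    assume H: "\<forall>c\<in>(\<lambda>(l,i,x,a). (coefs (fg d l i x a), - reward d x (spot d l i) a)) ` IDX d x0. lsum (Wset d) (fst c) z \<le> snd c"
    show "\<forall>(l,i,x,a)\<in>IDX d x0. fg d l i x a z \<le> - reward d x (spot d l i) a"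
    proof (clarify)
      fix l i x a assume m: "(l,i,x,a) \<in> IDX d x0"
      then have "lsum (Wset d) (coefs (fg d l i x a)) z \<le> - reward d x (spot d l i) a"
        using H by force
      then show "fg d l i x a z \<le> - reward d x (spot d l i) a" using r1[OF m] by simp
    qed
  next
    assume H: "\<forall>(l,i,x,a)\<in>IDX d x0. fg d l i x a z \<le> - reward d x (spot d l i) a"
    show "\<forall>c\<in>(\<lambda>(l,i,x,a). (coefs (fg d l i x a), - reward d x (spot d l i) a)) ` IDX d x0. lsum (Wset d) (fst c) z \<le> snd c"
    proof (clarify)
      fix l i x a assume m: "(l,i,x,a) \<in> IDX d x0"
      then show "lsum (Wset d) (fst (coefs (fg d l i x a), - reward d x (spot d l i) a)) z \<le> snd (coefs (fg d l i x a), - reward d x (spot d l i) a)"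
        using H r1[OF m] by force
    qed
  qed
  have EB: "(\<forall>c\<in>(\<lambda>(l,x). (coefs (ft d l x), - reward d x (spot d l (nI d - 1)) ActA)) ` ({1..nL d} \<times> UNIV). lsum (Wset d) (fst c) z \<le> snd c)
     \<longleftrightarrow> (\<forall>l\<in>{1..nL d}. \<forall>x. ft d l x z \<le> - reward d x (spot d l (nI d - 1)) ActA)"
    using r2 by auto
  show ?thesis
    unfolding satc_def Cset_def ball_Un EA EB using r3 r4 by simp
qed

lemma fg_iff: "fg d l i x a z \<le> - reward d x (spot d l i) a \<longleftrightarrow>
   UU z l i x \<ge> reward d x (spot d l i) a - penalty d (bet z) l i x a + disc d * UU z l (gstage d i x a) (ftrans x a)"
  unfolding fg_def by (rule iffI) linarith+

lemma sat_feas: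
  "satc (Wset d) (Cset d x0) z \<longleftrightarrow> plp_feasible d x0 (bet z) (UU z) \<and> z tv = plp_obj d x0 (UU z)"
proof -
  have A: "(\<forall>(l,i,x,a)\<in>IDX d x0. fg d l i x a z \<le> - reward d x (spot d l i) a) \<longleftrightarrow>
    (\<forall>l\<in>{1..nL d}. (\<forall>a\<in>feas_act d 0 x0.
           UU z l 0 x0 \<ge> reward d x0 (spot d l 0) a - penalty d (bet z) l 0 x0 a
                      + disc d * UU z l (gstage d 0 x0 a) (ftrans x0 a)) \<and>
        (\<forall>i\<in>{1..nI d - 2}. \<forall>x::mode. \<forall>a\<in>feas_act d i x.
           UU z l i x \<ge> reward d x (spot d l i) a - penalty d (bet z) l i x a
                      + disc d * UU z l (gstage d i x a) (ftrans x a)))"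
    unfolding fg_iff IDX_def by auto
  have B: "ft d l x z \<le> - reward d x (spot d l (nI d - 1)) ActA \<longleftrightarrow> UU z l (nI d - 1) x \<ge> reward d x (spot d l (nI d - 1)) ActA" for l x
    unfolding ft_def by simp
  have C: "fo d x0 z \<le> 0 \<and> - fo d x0 z \<le> 0 \<longleftrightarrow> z tv = plp_obj d x0 (UU z)"
    unfolding fo_def by auto
  show ?thesis unfolding sat_iff A B C plp_feasible_def by blast
qed

lemma UA_nonneg:
  assumes F: "plp_feasible d x0 \<beta> U" and l: "l \<in> {1..nL d}" and disc: "0 < disc d"
  shows "1 \<le> i \<Longrightarrow> i \<le> nI d - 1 \<Longrightarrow> 0 \<le> U l i ModeA"
proof (induction "nI d - 1 - i" arbitrary: i)
  case 0
  then have "i = nI d - 1" by simp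
  have "U l (nI d - 1) ModeA \<ge> reward d ModeA (spot d l (nI d - 1)) ActA"
    using F l unfolding plp_feasible_def by blast
  then show ?case using \<open>i = nI d - 1\<close> by (simp add: reward_AA)
next
  case (Suc k)
  then have i: "i \<in> {1..nI d - 2}" by auto
  have IH: "0 \<le> U l (i+1) ModeA" using Suc by auto
  have "U l i ModeA \<ge> reward d ModeA (spot d l i) ActA - penalty d \<beta> l i ModeA ActA
           + disc d * U l (gstage d i ModeA ActA) (ftrans ModeA ActA)"
    using F l i ActA_feas[of d i ModeA] unfolding plp_feasible_def by blast
  then have "U l i ModeA \<ge> disc d * U l (i+1) ModeA"
    by (simp add: reward_AA penalty_A gstage_A ftrans_A)
  moreover have "disc d * U l (i+1) ModeA \<ge> 0" using IH disc by simp
  ultimately show ?case by linarith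
qed

lemma obj_lower:
  assumes F: "plp_feasible d x0 \<beta> U" and I2: "nI d \<ge> 2" and L1: "nL d \<ge> 1"
    and disc: "0 < disc d" and x0: "x0 \<in> {ModeO, ModeM}"
  shows "salv d \<le> plp_obj d x0 U"
proof -
  have each: "salv d \<le> U l 0 x0" if l: "l \<in> {1..nL d}" for l
  proof -
    have "U l 0 x0 \<ge> reward d x0 (spot d l 0) ActA - penalty d \<beta> l 0 x0 ActA
           + disc d * U l (gstage d 0 x0 ActA) (ftrans x0 ActA)"
      using F l ActA_feas[of d 0 x0] unfolding plp_feasible_def by blast
    then have "U l 0 x0 \<ge> salv d + disc d * U l 1 ModeA"
      using x0 by (simp add: reward_xA penalty_A gstage_A ftrans_A)
    moreover have "0 \<le> U l 1 ModeA" using UA_nonneg[OF F l disc, of 1] I2 by simp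
    ultimately show ?thesis using disc by (smt (verit) mult_nonneg_nonneg)
  qed
  have "real (nL d) * salv d = (\<Sum>l\<in>{1..nL d}. salv d)" by simp
  also have "\<dots> \<le> (\<Sum>l\<in>{1..nL d}. U l 0 x0)" using each by (rule sum_mono)
  finally have "real (nL d) * salv d \<le> (\<Sum>l\<in>{1..nL d}. U l 0 x0)" .
  then show ?thesis unfolding plp_obj_def using L1 by (simp add: field_simps)
qed

lemma feasible_exists:
  assumes d1: "0 < disc d" and d2: "disc d < 1"
  shows "\<exists>\<beta> U. plp_feasible d x0 \<beta> U"
proof -
  define Rs where "Rs = (\<Sum>l\<in>{1..nL d}. \<Sum>i\<in>{..nI d}. \<Sum>x\<in>(UNIV::mode set). \<Sum>a\<in>(UNIV::action set). \<bar>reward d x (spot d l i) a\<bar>)"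
  define K where "K = Rs / (1 - disc d)"
  have Rle: "reward d x (spot d l i) a \<le> Rs" if "l \<in> {1..nL d}" "i \<le> nI d" for l i x a
  proof -
    have "reward d x (spot d l i) a \<le> \<bar>reward d x (spot d l i) a\<bar>" by simp
    also have "\<dots> \<le> (\<Sum>a\<in>(UNIV::action set). \<bar>reward d x (spot d l i) a\<bar>)"
      by (rule member_le_sum) auto
    also have "\<dots> \<le> (\<Sum>x\<in>(UNIV::mode set). \<Sum>a\<in>(UNIV::action set). \<bar>reward d x (spot d l i) a\<bar>)"
      by (rule member_le_sum) (auto intro: sum_nonneg)
    also have "\<dots> \<le> (\<Sum>i\<in>{..nI d}. \<Sum>x\<in>(UNIV::mode set). \<Sum>a\<in>(UNIV::action set). \<bar>reward d x (spot d l i) a\<bar>)"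
      by (rule member_le_sum) (use that in \<open>auto intro: sum_nonneg\<close>)
    also have "\<dots> \<le> Rs" unfolding Rs_def
      by (rule member_le_sum) (use that in \<open>auto intro: sum_nonneg\<close>)
    finally show ?thesis .
  qed
  have Rs0: "0 \<le> Rs" unfolding Rs_def by (intro sum_nonneg) auto
  have K1': "K * (1 - disc d) = Rs" unfolding K_def using d2 by simp
  have K1: "K - disc d * K = Rs" using K1' by (simp add: algebra_simps)
  have K0: "Rs \<le> K" using K1 Rs0 d1 d2
    by (smt (verit) mult_nonneg_nonneg K_def divide_nonneg_pos)
  have "plp_feasible d x0 (\<lambda>j x b. 0) (\<lambda>l i x. K)"
    unfolding plp_feasible_def
  proof (intro ballI allI conjI)
    fix l a assume l: "l \<in> {1..nL d}" and "a \<in> feas_act d 0 x0"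
    show "K \<ge> reward d x0 (spot d l 0) a - penalty d (\<lambda>j x b. 0) l 0 x0 a + disc d * K"
      using Rle[OF l, of 0 x0 a] K1 by (simp add: penalty_zero)
  next
    fix l i x a assume l: "l \<in> {1..nL d}" and i: "i \<in> {1..nI d - 2}" and "a \<in> feas_act d i x"
    show "K \<ge> reward d x (spot d l i) a - penalty d (\<lambda>j x b. 0) l i x a + disc d * K"
    proof -
      have "i \<le> nI d" using i by auto
      then show ?thesis using Rle[OF l, of i x a] K1 by (simp add: penalty_zero)
    qed
  next
    fix l x assume l: "l \<in> {1..nL d}"
    show "K \<ge> reward d x (spot d l (nI d - 1)) ActA"
      using Rle[OF l, of "nI d - 1" x ActA] K0 by simp
  qed
  then show ?thesis by blast
qed

lemma Vset_closed:
  "closed {plp_obj d x0 U | \<beta> U. plp_feasible d x0 \<beta> U}"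
proof -
  have "{w. \<exists>z. z tv = w \<and> satc (Wset d) (Cset d x0) z} = {plp_obj d x0 U | \<beta> U. plp_feasible d x0 \<beta> U}"
  proof (intro set_eqI iffI)
    fix w assume "w \<in> {w. \<exists>z. z tv = w \<and> satc (Wset d) (Cset d x0) z}"
    then obtain z where "z tv = w" "satc (Wset d) (Cset d x0) z" by blast
    then show "w \<in> {plp_obj d x0 U | \<beta> U. plp_feasible d x0 \<beta> U}" using sat_feas by blast
  next
    fix w assume "w \<in> {plp_obj d x0 U | \<beta> U. plp_feasible d x0 \<beta> U}"
    then obtain \<beta> U where F: "plp_feasible d x0 \<beta> U" and w: "w = plp_obj d x0 U" by blast
    define z :: "var \<Rightarrow> real" where "z u = (case u of Inl (j,x,b) \<Rightarrow> \<beta> j x b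
       | Inr (Inl (l,i,x)) \<Rightarrow> U l i x | Inr (Inr _) \<Rightarrow> plp_obj d x0 U)" for u
    have b: "bet z = \<beta>" unfolding bet_def z_def by (intro ext) simp
    have u: "UU z = U" unfolding UU_def z_def by (intro ext) simp
    have t: "z tv = w" unfolding z_def tv_def w by simp
    have "satc (Wset d) (Cset d x0) z" using sat_feas F b u t w by simp
    then show "w \<in> {w. \<exists>z. z tv = w \<and> satc (Wset d) (Cset d x0) z}" using t by blast
  qed
  moreover have "closed {w. \<exists>z. z tv = w \<and> satc (Wset d) (Cset d x0) z}"
    by (rule closed_proj[OF finite_Wset tv_Wset finite_Cset])
  ultimately show ?thesis by simp
qed

theorem proposition1:
  fixes d :: plp_data and x0 :: mode
  assumes "nI d \<ge> 2" and "nM d \<ge> 1" and "nR d \<ge> 1" and "nL d \<ge> 1"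
    and "\<forall>j. nB d j \<ge> 1"
    and "0 < disc d" and "disc d < 1"
    and "\<forall>l i. fst (spot d l i) \<ge> 0 \<and> fst (snd (spot d l i)) \<ge> 0 \<and> snd (snd (spot d l i)) \<ge> 0"
    and "x0 \<in> {ModeO, ModeM}"
  shows "(\<exists>\<beta> U. plp_feasible d x0 \<beta> U)
       \<and> bdd_below {plp_obj d x0 U | \<beta> U. plp_feasible d x0 \<beta> U}
       \<and> (\<exists>\<beta> U. plp_feasible d x0 \<beta> U
              \<and> plp_obj d x0 U = (INF (\<beta>', U') \<in> {(\<beta>', U'). plp_feasible d x0 \<beta>' U'}. plp_obj d x0 U')
              \<and> (\<forall>\<beta>' U'. plp_feasible d x0 \<beta>' U' \<longrightarrow> plp_obj d x0 U \<le> plp_obj d x0 U'))"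
proof -
  define V where "V = {plp_obj d x0 U | \<beta> U. plp_feasible d x0 \<beta> U}"
  have ex: "\<exists>\<beta> U. plp_feasible d x0 \<beta> U" using feasible_exists assms(6,7) by blast
  then have ne: "V \<noteq> {}" unfolding V_def by blast
  have bdd: "bdd_below V" unfolding V_def bdd_below_def
    using obj_lower assms(1,4,6,9) by blast
  have cl: "closed V" unfolding V_def by (rule Vset_closed)
  have "Inf V \<in> V" by (rule closed_contains_Inf[OF ne bdd cl])
  moreover have "\<forall>w\<in>V. \<exists>\<beta> U. w = plp_obj d x0 U \<and> plp_feasible d x0 \<beta> U"
    unfolding V_def by blast
  ultimately obtain \<beta> U where F: "plp_feasible d x0 \<beta> U" and eq: "plp_obj d x0 U = Inf V"
    by metis
  have img: "(\<lambda>(\<beta>', U'). plp_obj d x0 U') ` {(\<beta>', U'). plp_feasible d x0 \<beta>' U'} = V"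
    unfolding V_def by auto
  have low: "plp_obj d x0 U \<le> plp_obj d x0 U'" if "plp_feasible d x0 \<beta>' U'" for \<beta>' U'
  proof -
    have "plp_obj d x0 U' \<in> V" unfolding V_def using that by blast
    then show ?thesis unfolding eq by (rule cInf_lower[OF _ bdd])
  qed
  have eq2: "plp_obj d x0 U = (INF (\<beta>', U') \<in> {(\<beta>', U'). plp_feasible d x0 \<beta>' U'}. plp_obj d x0 U')"
    using eq img by simp
  have bdd': "bdd_below {plp_obj d x0 U | \<beta> U. plp_feasible d x0 \<beta> U}"
    using bdd unfolding V_def .
  show ?thesis
    using ex bdd' F eq2 low by blast
qed

end
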